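(* For every integer $m\ge0$, the following identity of rational functions in indeterminates $x,y$ holds: $$\sum_{r=0}^{m}\sum_{s=0}^{m-r}\binom{m-r+1}{s}\binom{m-s}{r}\frac{x^ry^s}{(1-x)^{r+s}(1-y)^{r+s}}=\frac{1-x^{m+2}y^{m+2}-x(1-x^{m+1}y^{m+1})-(1-xy)y^{m+1}}{(1-xy)(1-x)^{m+1}(1-y)^{m+1}}.$$ *)

theory Defs
  imports Complex_Main
begin

end

theory Submission
  imports Defs
begin

definition cc :: "nat \<Rightarrow> nat \<Rightarrow> nat \<Rightarrow> nat \<Rightarrow> nat" where
  "cc a b r s = (if r + s \<le> a \<and> r + s \<le> b then ((a - r) choose s) * ((b - s) choose r) else 0)"

lemma abc_nat: "((a::nat) + b) * c = b * c + a * c" by (simp add: algebra_simps)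

lemma cc_rec1:
  "cc (n+2) (n+1) r s = cc (n+1) (n+1) r s + (case s of 0 \<Rightarrow> 0 | Suc t \<Rightarrow> cc (n+1) n r t)"
proof (cases s)
  case 0
  then show ?thesis by (simp add: cc_def)
next
  case (Suc t)
  show ?thesis
  proof (cases "r + s \<le> n + 1")
    case True
    have e: "n + 2 - r = Suc (n + 1 - r)" using True by simp
    have e2: "n - t = n + 1 - s" using Suc by simp
    have h1: "cc (n+2) (n+1) r s = ((n + 2 - r) choose s) * ((n + 1 - s) choose r)"
      unfolding cc_def using True by simp
    have h2: "cc (n+1) (n+1) r s = ((n + 1 - r) choose s) * ((n + 1 - s) choose r)"
      unfolding cc_def using True by simp
    have h3: "cc (n+1) n r t = ((n + 1 - r) choose t) * ((n + 1 - s) choose r)"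
      unfolding cc_def e2[symmetric] using True Suc by simp
    have h4: "(n + 2 - r) choose s = ((n + 1 - r) choose t) + ((n + 1 - r) choose s)"
      unfolding e Suc by (rule binomial_Suc_Suc)
    show ?thesis unfolding h1 h2 h4 using h3 Suc by (simp only: abc_nat nat.case)
  next
    case False
    then show ?thesis using Suc by (simp add: cc_def)
  qed
qed

lemma cc_rec2:
  "cc (n+1) (n+1) r s = cc (n+1) n r s + (case r of 0 \<Rightarrow> 0 | Suc q \<Rightarrow> cc n n q s)
     + (if r = 0 \<and> s = n + 1 then 1 else 0)"
proof (cases r)
  case 0
  then show ?thesis by (auto simp add: cc_def)
next
  case (Suc q)
  show ?thesis
  proof (cases "r + s \<le> n + 1")
    case True
    have e: "n + 1 - s = Suc (n - s)" using Suc True by simp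
    have e2: "n - q = n + 1 - r" using Suc True by simp
    have h1: "cc (n+1) (n+1) r s = ((n + 1 - r) choose s) * ((n + 1 - s) choose r)"
      unfolding cc_def using True by simp
    have h2: "cc (n+1) n r s = ((n + 1 - r) choose s) * ((n - s) choose r)"
    proof (cases "r + s \<le> n")
      case True
      then show ?thesis unfolding cc_def by simp
    next
      case False
      then have "n - s < r" using Suc by auto
      then show ?thesis unfolding cc_def using False by simp
    qed
    have h3: "cc n n q s = ((n + 1 - r) choose s) * ((n - s) choose q)"
      unfolding cc_def e2[symmetric] using True Suc by simp
    have h4: "(n + 1 - s) choose r = ((n - s) choose q) + ((n - s) choose r)"
      unfolding e Suc by (rule binomial_Suc_Suc)
    have h5: "(if r = 0 \<and> s = n + 1 then 1 else 0) = (0::nat)" using Suc by simp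
    show ?thesis unfolding h1 h2 h4 h5 using h3 Suc by (simp add: algebra_simps)
  next
    case False
    then show ?thesis using Suc by (simp add: cc_def)
  qed
qed

definition FF :: "nat \<Rightarrow> nat \<Rightarrow> nat \<Rightarrow> 'a::field \<Rightarrow> 'a \<Rightarrow> 'a" where
  "FF K a b X Y = (\<Sum>r\<le>K. \<Sum>s\<le>K. of_nat (cc a b r s) * X ^ r * Y ^ s)"

lemma shift_sum:
  fixes Z :: "'a::field"
  assumes "f K = 0" "g 0 = 0" "\<And>t. g (Suc t) = Z * (f t * Z ^ t)"
  shows "(\<Sum>s\<le>K. g s) = Z * (\<Sum>s\<le>K. f s * Z ^ s)"
proof (cases K)
  case 0
  then show ?thesis using assms by simp
next
  case (Suc L)
  have "(\<Sum>s\<le>K. g s) = (\<Sum>t\<le>L. Z * (f t * Z ^ t))"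
    unfolding Suc sum.atMost_Suc_shift using assms by simp
  also have "\<dots> = Z * (\<Sum>s\<le>K. f s * Z ^ s)"
    unfolding Suc using assms(1) Suc by (simp add: sum_distrib_left)
  finally show ?thesis .
qed

lemma FF_rec1:
  fixes X Y :: "'a::field"
  assumes "n + 1 \<le> K"
  shows "FF K (n+2) (n+1) X Y = FF K (n+1) (n+1) X Y + Y * FF K (n+1) n X Y"
proof -
  have "FF K (n+2) (n+1) X Y = FF K (n+1) (n+1) X Y +
     (\<Sum>r\<le>K. \<Sum>s\<le>K. of_nat (case s of 0 \<Rightarrow> 0 | Suc t \<Rightarrow> cc (n+1) n r t) * X ^ r * Y ^ s)"
    unfolding FF_def cc_rec1 of_nat_add by (simp add: ring_distribs sum.distrib)
  also have "(\<Sum>r\<le>K. \<Sum>s\<le>K. of_nat (case s of 0 \<Rightarrow> 0 | Suc t \<Rightarrow> cc (n+1) n r t) * X ^ r * Y ^ s)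
     = (\<Sum>r\<le>K. Y * (\<Sum>s\<le>K. (of_nat (cc (n+1) n r s) * X ^ r) * Y ^ s))"
  proof (rule sum.cong[OF refl])
    fix r assume "r \<in> {..K}"
    show "(\<Sum>s\<le>K. of_nat (case s of 0 \<Rightarrow> 0 | Suc t \<Rightarrow> cc (n+1) n r t) * X ^ r * Y ^ s)
       = Y * (\<Sum>s\<le>K. (of_nat (cc (n+1) n r s) * X ^ r) * Y ^ s)"
      by (rule shift_sum) (use assms in \<open>auto simp: cc_def\<close>)
  qed
  also have "\<dots> = Y * FF K (n+1) n X Y"
    unfolding FF_def by (simp add: sum_distrib_left)
  finally show ?thesis .
qed

lemma FF_rec2:
  fixes X Y :: "'a::field"
  assumes "n + 1 \<le> K"
  shows "FF K (n+1) (n+1) X Y = FF K (n+1) n X Y + X * FF K n n X Y + Y ^ (n+1)"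
proof -
  have "FF K (n+1) (n+1) X Y = FF K (n+1) n X Y +
     (\<Sum>r\<le>K. \<Sum>s\<le>K. of_nat (case r of 0 \<Rightarrow> 0 | Suc q \<Rightarrow> cc n n q s) * X ^ r * Y ^ s) +
     (\<Sum>r\<le>K. \<Sum>s\<le>K. of_nat (if r = 0 \<and> s = n + 1 then 1 else 0) * X ^ r * Y ^ s)"
    unfolding FF_def cc_rec2[of n] of_nat_add by (simp add: ring_distribs sum.distrib)
  also have "(\<Sum>r\<le>K. \<Sum>s\<le>K. of_nat (case r of 0 \<Rightarrow> 0 | Suc q \<Rightarrow> cc n n q s) * X ^ r * Y ^ s)
     = X * (\<Sum>r\<le>K. (\<Sum>s\<le>K. of_nat (cc n n r s) * Y ^ s) * X ^ r)"
  proof (rule shift_sum)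
    show "(\<Sum>s\<le>K. of_nat (cc n n K s) * Y ^ s) = 0" using assms by (simp add: cc_def)
    show "(\<Sum>s\<le>K. of_nat (case 0 of 0 \<Rightarrow> 0 | Suc q \<Rightarrow> cc n n q s) * X ^ 0 * Y ^ s) = 0" by simp
    fix t
    show "(\<Sum>s\<le>K. of_nat (case Suc t of 0 \<Rightarrow> 0 | Suc q \<Rightarrow> cc n n q s) * X ^ Suc t * Y ^ s)
      = X * ((\<Sum>s\<le>K. of_nat (cc n n t s) * Y ^ s) * X ^ t)"
      by (simp add: sum_distrib_left mult_ac)
  qed
  also have "\<dots> = X * FF K n n X Y"
    unfolding FF_def sum_distrib_left sum_distrib_right by (simp add: mult_ac)
  also have "(\<Sum>r\<le>K. \<Sum>s\<le>K. of_nat (if r = 0 \<and> s = n + 1 then 1 else 0) * X ^ r * Y ^ s)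
      = (\<Sum>r\<le>K. if r = 0 then (\<Sum>s\<le>K. if s = n + 1 then Y ^ (n+1) else 0) else 0)"
  proof -
    have pt: "of_nat (if r = 0 \<and> s = n + 1 then 1 else 0) * X ^ r * Y ^ s
       = (if r = 0 then (if s = n + 1 then Y ^ (n+1) else 0) else (0::'a))" for r s by auto
    show ?thesis unfolding pt by (simp add: if_distrib[symmetric] sum.If_cases)
  qed
  also have "\<dots> = Y ^ (n+1)" using assms by simp
  finally show ?thesis .
qed

lemma FF_base:
  fixes X Y :: "'a::field"
  shows "FF K a 0 X Y = 1"
proof -
  have pt: "of_nat (cc a 0 r s) * X ^ r * Y ^ s = (if r = 0 then (if s = 0 then 1 else 0) else (0::'a))" for r s
    by (cases r; cases s) (simp_all add: cc_def)
  have "FF K a 0 X Y = (\<Sum>r\<le>K. \<Sum>s\<le>K. (if r = 0 then (if s = 0 then 1 else 0) else (0::'a)))"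
    unfolding FF_def pt ..
  also have "\<dots> = 1" by (simp add: if_distrib[symmetric] sum.If_cases)
  finally show ?thesis .
qed

lemma alg1:
  fixes x y u s :: "'a::field"
  assumes "u \<noteq> 0"
  shows "(s + (x*y)^(n+1) - x * s - y^(n+1)) / u^(n+1) + x / u * (s / u^n) + (y/u)^(n+1)
     = (s + (x*y)^(n+1)) / u^(n+1)"
  using assms by (simp add: field_simps power_divide)

lemma alg2:
  fixes x y s u p q :: "'a::field"
  assumes uu: "u = (1-x)*(1-y)" and u0: "u \<noteq> 0"
  shows "(s + p) / u^(n+1) + y / u * ((s + p - x * s - q) / u^(n+1))
     = (s + p + x*y*p - x * (s + p) - y*q) / u^(n+2)"
proof -
  have v0: "u^(n+1) \<noteq> 0" using u0 by simp
  have e: "u^(n+2) = u * u^(n+1)" by simp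
  have key: "u*(s+p) + y*(s+p-x*s-q) = s + p + x*y*p - x*(s+p) - y*q"
    unfolding uu by (simp add: algebra_simps)
  have "(s + p) / u^(n+1) + y / u * ((s + p - x * s - q) / u^(n+1))
      = (u*(s+p) + y*(s+p-x*s-q)) / (u * u^(n+1))"
    using u0 v0 by (simp add: field_simps)
  then show ?thesis unfolding key e .
qed

lemma main_closed:
  fixes x y :: "'a::field"
  assumes u0: "(1-x)*(1-y) \<noteq> 0" and mK: "m \<le> K"
  shows "FF K m m (x/((1-x)*(1-y))) (y/((1-x)*(1-y))) = (\<Sum>k\<le>m. (x*y)^k) / ((1-x)*(1-y))^m
       \<and> FF K (m+1) m (x/((1-x)*(1-y))) (y/((1-x)*(1-y)))
         = ((\<Sum>k\<le>m+1. (x*y)^k) - x*(\<Sum>k\<le>m. (x*y)^k) - y^(m+1)) / ((1-x)*(1-y))^(m+1)"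
  using mK
proof (induction m)
  case 0
  show ?case using u0 by (simp add: FF_base algebra_simps)
next
  case (Suc n)
  define u where "u = (1-x)*(1-y)"
  define s where "s = (\<Sum>k\<le>n. (x*y)^k)"
  have u0': "u \<noteq> 0" using u0 u_def by simp
  from Suc have IH: "FF K n n (x/u) (y/u) = s / u^n"
      "FF K (n+1) n (x/u) (y/u) = (s + (x*y)^(n+1) - x * s - y^(n+1)) / u^(n+1)"
    by (simp_all add: u_def s_def)
  have D: "FF K (n+1) (n+1) (x/u) (y/u) = (s + (x*y)^(n+1)) / u^(n+1)"
    using FF_rec2[of n K "x/u" "y/u"] Suc.prems IH alg1[OF u0', of s x y n] by simp
  have "FF K (n+2) (n+1) (x/u) (y/u) = FF K (n+1) (n+1) (x/u) (y/u) + y/u * FF K (n+1) n (x/u) (y/u)"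
    using FF_rec1[of n K "x/u" "y/u"] Suc.prems by simp
  also have "\<dots> = (s + (x*y)^(n+1)) / u^(n+1) + y / u * ((s + (x*y)^(n+1) - x * s - y^(n+1)) / u^(n+1))"
    unfolding D IH(2) ..
  also have "\<dots> = (s + (x*y)^(n+1) + x*y*(x*y)^(n+1) - x * (s + (x*y)^(n+1)) - y*y^(n+1)) / u^(n+2)"
    by (rule alg2[OF u_def u0'])
  finally have A: "FF K (n+2) (n+1) (x/u) (y/u) = (s + (x*y)^(n+1) + x*y*(x*y)^(n+1) - x * (s + (x*y)^(n+1)) - y*y^(n+1)) / u^(n+2)" .
  have S1: "(\<Sum>k\<le>Suc n. (x*y)^k) = s + (x*y)^(n+1)" unfolding s_def by simp
  have S2: "(\<Sum>k\<le>Suc n + 1. (x*y)^k) = s + (x*y)^(n+1) + x*y*(x*y)^(n+1)" unfolding s_def by simp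
  have P: "y ^ (Suc n + 1) = y*y^(n+1)" by simp
  show ?case unfolding S1 S2 P using D A unfolding u_def by simp
qed

theorem corollary2p5:
  fixes x y :: "'a::field_char_0" and m :: nat
  assumes "x \<noteq> 1" and "y \<noteq> 1" and "x * y \<noteq> 1"
  shows "(\<Sum>r=0..m. \<Sum>s=0..m-r.
            of_nat ((m - r + 1) choose s) * of_nat ((m - s) choose r) * x ^ r * y ^ s
            / ((1 - x) ^ (r + s) * (1 - y) ^ (r + s)))
       = (1 - x ^ (m + 2) * y ^ (m + 2) - x * (1 - x ^ (m + 1) * y ^ (m + 1)) - (1 - x * y) * y ^ (m + 1))
         / ((1 - x * y) * (1 - x) ^ (m + 1) * (1 - y) ^ (m + 1))"
proof -
  define u where "u = (1-x)*(1-y)"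
  have u0: "(1-x)*(1-y) \<noteq> 0" using assms by simp
  have u0': "u \<noteq> 0" using u0 u_def by simp
  have p0: "1 - x*y \<noteq> 0" using assms by simp
  have inner: "(\<Sum>s=0..m-r. of_nat ((m - r + 1) choose s) * of_nat ((m - s) choose r) * x ^ r * y ^ s
            / ((1 - x) ^ (r + s) * (1 - y) ^ (r + s)))
     = (\<Sum>s\<le>m. of_nat (cc (m+1) m r s) * (x/u) ^ r * (y/u) ^ s)" if r: "r \<le> m" for r
  proof -
    have "(\<Sum>s=0..m-r. of_nat ((m - r + 1) choose s) * of_nat ((m - s) choose r) * x ^ r * y ^ s
            / ((1 - x) ^ (r + s) * (1 - y) ^ (r + s)))
       = (\<Sum>s=0..m-r. of_nat (cc (m+1) m r s) * (x/u) ^ r * (y/u) ^ s)"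
    proof (rule sum.cong[OF refl])
      fix s assume "s \<in> {0..m-r}"
      then have rs: "r + s \<le> m" using r by auto
      have c: "cc (m+1) m r s = ((m - r + 1) choose s) * ((m - s) choose r)"
        unfolding cc_def using rs by (simp add: Suc_diff_le r)
      have "(x/u)^r * (y/u)^s = x^r * y^s / ((1 - x) ^ (r + s) * (1 - y) ^ (r + s))"
      proof -
        have "u^(r+s) = (1 - x) ^ (r + s) * (1 - y) ^ (r + s)" unfolding u_def by (rule power_mult_distrib)
        moreover have "(x/u)^r * (y/u)^s = x^r * y^s / u^(r+s)" by (simp add: power_divide power_add)
        ultimately show ?thesis by simp
      qed
      then show "of_nat ((m - r + 1) choose s) * of_nat ((m - s) choose r) * x ^ r * y ^ s
            / ((1 - x) ^ (r + s) * (1 - y) ^ (r + s)) = of_nat (cc (m+1) m r s) * (x/u) ^ r * (y/u) ^ s"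
        unfolding c by (simp add: mult.assoc)
    qed
    also have "\<dots> = (\<Sum>s\<le>m. of_nat (cc (m+1) m r s) * (x/u) ^ r * (y/u) ^ s)"
      by (rule sum.mono_neutral_left) (auto simp: cc_def)
    finally show ?thesis .
  qed
  have "(\<Sum>r=0..m. \<Sum>s=0..m-r.
            of_nat ((m - r + 1) choose s) * of_nat ((m - s) choose r) * x ^ r * y ^ s
            / ((1 - x) ^ (r + s) * (1 - y) ^ (r + s))) = FF m (m+1) m (x/u) (y/u)"
  proof -
    have "(\<Sum>r=0..m. \<Sum>s=0..m-r.
            of_nat ((m - r + 1) choose s) * of_nat ((m - s) choose r) * x ^ r * y ^ s
            / ((1 - x) ^ (r + s) * (1 - y) ^ (r + s)))
       = (\<Sum>r=0..m. \<Sum>s\<le>m. of_nat (cc (m+1) m r s) * (x/u) ^ r * (y/u) ^ s)"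
      by (rule sum.cong[OF refl], rule inner) simp
    then show ?thesis by (simp only: FF_def atLeast0AtMost)
  qed
  also have "\<dots> = ((\<Sum>k\<le>m+1. (x*y)^k) - x*(\<Sum>k\<le>m. (x*y)^k) - y^(m+1)) / u^(m+1)"
    using main_closed[OF u0, of m m] u_def by simp
  also have "\<dots> = (1 - x ^ (m + 2) * y ^ (m + 2) - x * (1 - x ^ (m + 1) * y ^ (m + 1)) - (1 - x * y) * y ^ (m + 1))
         / ((1 - x * y) * (1 - x) ^ (m + 1) * (1 - y) ^ (m + 1))"
  proof -
    have g1: "(1 - x*y) * (\<Sum>k\<le>m+1. (x*y)^k) = 1 - x ^ (m + 2) * y ^ (m + 2)"
      using sum_gp_basic[of "x*y" "m+1"] by (simp add: power_mult_distrib)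
    have g2: "(1 - x*y) * (\<Sum>k\<le>m. (x*y)^k) = 1 - x ^ (m + 1) * y ^ (m + 1)"
      using sum_gp_basic[of "x*y" "m"] by (simp add: power_mult_distrib)
    have den: "(1 - x * y) * (1 - x) ^ (m + 1) * (1 - y) ^ (m + 1) = (1 - x*y) * u^(m+1)"
      unfolding u_def by (simp add: power_mult_distrib)
    have "((\<Sum>k\<le>m+1. (x*y)^k) - x*(\<Sum>k\<le>m. (x*y)^k) - y^(m+1)) / u^(m+1)
        = ((1 - x*y) * ((\<Sum>k\<le>m+1. (x*y)^k) - x*(\<Sum>k\<le>m. (x*y)^k) - y^(m+1))) / ((1 - x*y) * u^(m+1))"
      using p0 by simp
    also have "(1 - x*y) * ((\<Sum>k\<le>m+1. (x*y)^k) - x*(\<Sum>k\<le>m. (x*y)^k) - y^(m+1))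
        = (1 - x*y) * (\<Sum>k\<le>m+1. (x*y)^k) - x*((1 - x*y) * (\<Sum>k\<le>m. (x*y)^k)) - (1 - x*y) * y^(m+1)"
      by (simp add: algebra_simps)
    finally show ?thesis unfolding g1 g2 den .
  qed
  finally show ?thesis .
qed

end
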